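(* Let $q$ be an odd prime power, $n$ a positive integer with $n\mid(q-1)$, $\lambda\in\mathbb{F}_q^{*}$ with multiplicative order dividing $\frac{q-1}{n}$, and let $\alpha_1,\dots,\alpha_n\in\mathbb{F}_q^{*}$ be the (pairwise distinct) roots of $x^n-\lambda$, i.e. $x^n-\lambda=\prod_{i=1}^n(x-\alpha_i)$, in some fixed order. Let $\ell\ge0$, $\boldsymbol\eta=(\eta_0,\dots,\eta_\ell)\in\mathbb{F}_q^{\ell+1}\setminus\{\boldsymbol0\}$, and let $k$ be an integer with $2\le k\le\frac{n-2\ell-1}{2}$. Let $\boldsymbol v=(v_1,\dots,v_n)$ with $v_i\in\{-1,1\}$ for $k\le i\le n$ and $v_i\in\mathbb{F}_q\setminus\{-1,0,1\}$ for $1\le i\le k-1$. Then the $( * )$-$(\mathcal{L},\mathcal{P})$-TGRS code $\mathcal{C}$ (defined in the context) is an LCD code, i.e. $\mathcal{C}\cap\mathcal{C}^{\perp}=\{\boldsymbol0\}$.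
   Context: The $( * )$-$(\mathcal{L},\mathcal{P})$-TGRS code is $\mathcal{C}=\{(v_1f(\alpha_1),\dots,v_nf(\alpha_n)) : f\in\mathcal{F}_{n,k,\boldsymbol\eta}\}$, where $\mathcal{F}_{n,k,\boldsymbol\eta}=\{\sum_{i=0}^{k-1}f_ix^i+f_0\sum_{j=0}^{\ell}\eta_jx^{k+j} : f_i\in\mathbb{F}_q\}$; equivalently it is generated by the $k\times n$ matrix whose first row is $\big(v_j(1+\sum_{t=0}^{\ell}\eta_t\alpha_j^{k+t})\big)_{j}$ and whose row $i$ ($1\le i\le k-1$) is $(v_j\alpha_j^{i})_j$. $\mathcal{C}^{\perp}$ is the dual with respect to the standard inner product $\langle\boldsymbol x,\boldsymbol y\rangle=\sum_i x_iy_i$. *)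

theory Defs
  imports "HOL-Computational_Algebra.Polynomial" "HOL-Library.Cardinality"
begin

text \<open>Vectors of length n are modelled as functions nat \<Rightarrow> 'a indexed by 1..n,
  and are required to vanish outside 1..n.\<close>

definition vecs :: "nat \<Rightarrow> (nat \<Rightarrow> 'a::zero) set" where
  "vecs n = {x. \<forall>j. j \<notin> {1..n} \<longrightarrow> x j = 0}"

definition tgrs_poly :: "nat \<Rightarrow> nat \<Rightarrow> (nat \<Rightarrow> 'a::comm_ring_1) \<Rightarrow> (nat \<Rightarrow> 'a) \<Rightarrow> 'a poly" where
  "tgrs_poly k l eta fc =
     (\<Sum>i<k. monom (fc i) i) + smult (fc 0) (\<Sum>j\<le>l. monom (eta j) (k + j))"

definition tgrs_code ::
  "nat \<Rightarrow> nat \<Rightarrow> nat \<Rightarrow> (nat \<Rightarrow> 'a::comm_ring_1) \<Rightarrow> (nat \<Rightarrow> 'a) \<Rightarrow> (nat \<Rightarrow> 'a) \<Rightarrow> (nat \<Rightarrow> 'a) set" where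
  "tgrs_code n k l eta alpha v =
     {(\<lambda>j. if j \<in> {1..n} then v j * poly (tgrs_poly k l eta fc) (alpha j) else 0) | fc. True}"

definition dual_code :: "nat \<Rightarrow> (nat \<Rightarrow> 'a::comm_ring_1) set \<Rightarrow> (nat \<Rightarrow> 'a) set" where
  "dual_code n C = {y \<in> vecs n. \<forall>c \<in> C. (\<Sum>j=1..n. c j * y j) = 0}"

definition is_LCD :: "nat \<Rightarrow> (nat \<Rightarrow> 'a::comm_ring_1) set \<Rightarrow> bool" where
  "is_LCD n C \<longleftrightarrow> C \<inter> dual_code n C = {(\<lambda>_. 0)}"

end

theory Submission
  imports Defs
begin

lemma of_nat_card_0: "of_nat CARD('a::{ring_1,finite}) = (0::'a)"
proof -
  have "(\<Sum>x\<in>UNIV. x) = (\<Sum>x\<in>(\<lambda>x. x + 1) ` UNIV. x::'a)"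
    by (metis surj_plus_right)
  also have "\<dots> = (\<Sum>x\<in>UNIV. x + 1)" by (subst sum.reindex) (auto simp: inj_on_def)
  also have "\<dots> = (\<Sum>x\<in>UNIV. x) + of_nat CARD('a)" by (simp add: sum.distrib)
  finally show ?thesis by simp
qed

lemma of_nat_n_nz:
  assumes "n dvd (CARD('a::{field,finite}) - 1)"
  shows "of_nat n \<noteq> (0::'a)"
proof
  assume "of_nat n = (0::'a)"
  then obtain c where "CARD('a) - 1 = n * c" using assms by auto
  hence "of_nat (CARD('a) - 1) = (0::'a)" using \<open>of_nat n = 0\<close> by simp
  moreover have "CARD('a) \<ge> 1" by (simp add: Suc_leI)
  ultimately have "of_nat CARD('a) - 1 = (0::'a)" by (simp add: of_nat_diff)
  thus False using of_nat_card_0[where 'a='a] by simp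
qed

lemma roots_iff:
  fixes lam :: "'a::field" and alpha :: "nat \<Rightarrow> 'a"
  assumes "monom 1 n - [:lam:] = (\<Prod>i=1..n. [:- alpha i, 1:])"
  shows "x ^ n = lam \<longleftrightarrow> x \<in> alpha ` {1..n}"
proof -
  have "x ^ n - lam = poly (monom 1 n - [:lam:]) x" by (simp add: poly_monom)
  also have "\<dots> = (\<Prod>i=1..n. x - alpha i)" unfolding assms by (simp add: poly_prod)
  finally have "x ^ n = lam \<longleftrightarrow> (\<Prod>i=1..n. x - alpha i) = 0" by (metis eq_iff_diff_eq_0)
  also have "\<dots> \<longleftrightarrow> x \<in> alpha ` {1..n}" by (auto simp: prod_zero_iff)
  finally show ?thesis .
qed

lemma power_sum_zero:
  fixes lam :: "'a::field" and alpha :: "nat \<Rightarrow> 'a"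
  assumes roots: "monom 1 n - [:lam:] = (\<Prod>i=1..n. [:- alpha i, 1:])"
    and inj: "inj_on alpha {1..n}" and lam: "lam \<noteq> 0"
    and m: "0 < m" "m < n"
  shows "(\<Sum>i=1..n. alpha i ^ m) = 0"
proof -
  define S where "S = alpha ` {1..n}"
  have cardS: "card S = n" unfolding S_def using inj by (simp add: card_image)
  have finS: "finite S" unfolding S_def by simp
  have inS: "x \<in> S \<longleftrightarrow> x ^ n = lam" for x using roots_iff[OF roots] S_def by blast
  have a1: "alpha 1 \<in> S" using m unfolding S_def by auto
  have nz: "x \<noteq> 0" if "x \<in> S" for x using inS[of x] that lam m by auto
  define U where "U = (\<lambda>x. x / alpha 1) ` S"
  have "inj_on (\<lambda>x. x / alpha 1) S" using nz[OF a1] by (auto simp: inj_on_def)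
  hence cardU: "card U = n" unfolding U_def using cardS by (simp add: card_image)
  have Un: "u ^ n = 1" if "u \<in> U" for u
    using that inS a1 nz[OF a1] unfolding U_def by (auto simp: power_divide)
  have "\<exists>w\<in>U. w ^ m \<noteq> 1"
  proof (rule ccontr)
    assume "\<not> ?thesis"
    hence "U \<subseteq> {x. poly (monom 1 m - 1) x = 0}" by (auto simp: poly_monom)
    moreover have "monom 1 m - 1 \<noteq> (0::'a poly)"
    proof
      assume "monom 1 m - 1 = (0::'a poly)"
      hence "coeff (monom 1 m - 1) m = (0::'a)" by simp
      thus False using m by (simp add: coeff_monom)
    qed
    ultimately have "card U \<le> degree (monom 1 m - 1 :: 'a poly)"
      using card_poly_roots_bound poly_roots_finite card_mono order_trans by metis
    also have "\<dots> \<le> m" using degree_diff_le[of "monom (1::'a) m" m 1] degree_monom_le[of "1::'a" m] by simp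
    finally show False using cardU m by simp
  qed
  then obtain w where wU: "w \<in> U" and wm: "w ^ m \<noteq> 1" by blast
  have wn: "w ^ n = 1" using Un[OF wU] .
  have w0: "w \<noteq> 0"
  proof
    assume "w = 0"
    hence "w ^ n = 0" using m by (simp add: power_0_left)
    thus False using wn by simp
  qed
  have injw: "inj_on ((*) w) S" using w0 by (auto simp: inj_on_def)
  have sub: "(*) w ` S \<subseteq> S"
  proof
    fix y assume "y \<in> (*) w ` S"
    then obtain x where x: "x \<in> S" "y = w * x" by blast
    have "x ^ n = lam" using x(1) inS by blast
    hence "y ^ n = lam" using x(2) wn by (simp add: power_mult_distrib)
    thus "y \<in> S" using inS by blast
  qed
  have img: "(*) w ` S = S"
    using card_subset_eq[OF finS sub] injw cardS by (simp add: card_image)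
  have sumS: "(\<Sum>i=1..n. alpha i ^ m) = (\<Sum>x\<in>S. x ^ m)"
    unfolding S_def using inj by (simp add: sum.reindex)
  have "(\<Sum>x\<in>S. x ^ m) = (\<Sum>x\<in>(*) w ` S. x ^ m)" using img by simp
  also have "\<dots> = (\<Sum>x\<in>S. (w * x) ^ m)" using injw by (simp add: sum.reindex)
  also have "\<dots> = w ^ m * (\<Sum>x\<in>S. x ^ m)" by (simp add: power_mult_distrib sum_distrib_left)
  finally have "(w ^ m - 1) * (\<Sum>x\<in>S. x ^ m) = 0" by (simp add: algebra_simps)
  thus ?thesis using wm sumS by simp
qed

lemma poly_sum_roots:
  fixes lam :: "'a::field" and alpha :: "nat \<Rightarrow> 'a" and p :: "'a poly"
  assumes roots: "monom 1 n - [:lam:] = (\<Prod>i=1..n. [:- alpha i, 1:])"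
    and inj: "inj_on alpha {1..n}" and lam: "lam \<noteq> 0"
    and deg: "degree p < n"
  shows "(\<Sum>j=1..n. poly p (alpha j)) = of_nat n * coeff p 0"
proof -
  have "(\<Sum>j=1..n. poly p (alpha j)) = (\<Sum>j=1..n. \<Sum>i\<le>degree p. coeff p i * alpha j ^ i)"
    by (simp add: poly_altdef)
  also have "\<dots> = (\<Sum>i\<le>degree p. coeff p i * (\<Sum>j=1..n. alpha j ^ i))"
    by (subst sum.swap) (simp add: sum_distrib_left)
  also have "\<dots> = (\<Sum>i\<le>degree p. if i = 0 then coeff p 0 * of_nat n else 0)"
  proof (rule sum.cong[OF refl])
    fix i assume "i \<in> {..degree p}"
    hence "i < n" using deg by auto
    thus "coeff p i * (\<Sum>j=1..n. alpha j ^ i) = (if i = 0 then coeff p 0 * of_nat n else 0)"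
      using power_sum_zero[OF roots inj lam, of i] by auto
  qed
  also have "\<dots> = of_nat n * coeff p 0" by (simp add: sum.delta)
  finally show ?thesis .
qed

lemma sum_monom_coeff:
  assumes "degree p < k"
  shows "(\<Sum>i<k. monom (coeff p i) i) = p"
proof (rule poly_eqI)
  fix m
  show "coeff (\<Sum>i<k. monom (coeff p i) i) m = coeff p m"
    using assms by (auto simp: coeff_sum coeff_monom coeff_eq_0)
qed

lemma degree_tgrs: "degree (tgrs_poly k l eta fc) \<le> k + l"
proof -
  have "degree (\<Sum>i<k. monom (fc i) i) \<le> k + l"
    by (rule degree_sum_le) (auto intro: order_trans[OF degree_monom_le])
  moreover have "degree (smult (fc 0) (\<Sum>j\<le>l. monom (eta j) (k + j))) \<le> k + l"
    by (rule order_trans[OF degree_smult_le], rule degree_sum_le)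
       (auto intro: order_trans[OF degree_monom_le])
  ultimately show ?thesis unfolding tgrs_poly_def by (meson degree_add_le)
qed

lemma poly_tgrs_0:
  assumes "0 < k"
  shows "poly (tgrs_poly k l eta fc) 0 = fc 0"
proof -
  have "(\<Sum>i<k. fc i * 0 ^ i) = (\<Sum>i<k. if i = 0 then fc 0 else 0)"
    by (rule sum.cong) (auto simp: power_0_left)
  also have "\<dots> = fc 0" using assms by (simp add: sum.delta)
  moreover have "(\<Sum>j\<le>l. eta j * (0::'a) ^ (k + j)) = 0"
    using assms by (intro sum.neutral) (simp add: power_0_left)
  ultimately show ?thesis using assms
    unfolding tgrs_poly_def by (simp add: poly_sum poly_monom)
qed


lemma split_sum:
  fixes v :: "nat \<Rightarrow> 'a::field"
  assumes "\<forall>i\<in>{k..n}. v i = 1 \<or> v i = -1" "k - 1 \<le> n"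
  shows "(\<Sum>j=1..n. v j ^ 2 * h j) = (\<Sum>j=1..n. h j) + (\<Sum>j=1..k-1. (v j ^ 2 - 1) * h j)"
proof -
  have "(\<Sum>j=1..n. v j ^ 2 * h j) = (\<Sum>j=1..n. h j) + (\<Sum>j=1..n. (v j ^ 2 - 1) * h j)"
    by (simp add: sum.distrib[symmetric] algebra_simps)
  also have "(\<Sum>j=1..n. (v j ^ 2 - 1) * h j) = (\<Sum>j=1..k-1. (v j ^ 2 - 1) * h j)"
  proof (rule sum.mono_neutral_right)
    show "\<forall>i\<in>{1..n} - {1..k - 1}. (v i ^ 2 - 1) * h i = 0"
    proof
      fix i assume "i \<in> {1..n} - {1..k - 1}"
      hence "i \<in> {k..n}" by auto
      hence "v i = 1 \<or> v i = -1" using assms(1) by blast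
      hence "v i ^ 2 = 1" by (auto simp: power2_eq_square)
      thus "(v i ^ 2 - 1) * h i = 0" by simp
    qed
  qed (use assms(2) in auto)
  finally show ?thesis .
qed

theorem theorem4p1:
  fixes lam :: "'a::{field,finite}"
    and alpha v eta :: "nat \<Rightarrow> 'a"
    and n k l :: nat
  assumes q_odd: "odd CARD('a)"
    and n_pos: "0 < n"
    and n_dvd: "n dvd (CARD('a) - 1)"
    and lam_nz: "lam \<noteq> 0"
    and lam_ord: "lam ^ ((CARD('a) - 1) div n) = 1"
    and alpha_distinct: "inj_on alpha {1..n}"
    and alpha_roots: "monom 1 n - [:lam:] = (\<Prod>i=1..n. [:- alpha i, 1:])"
    and eta_nz: "\<exists>j\<le>l. eta j \<noteq> 0"
    and k_ge: "2 \<le> k"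
    and k_le: "2 * k \<le> n - 2 * l - 1" "2 * l + 1 \<le> n"
    and v_pm: "\<forall>i\<in>{k..n}. v i = 1 \<or> v i = -1"
    and v_other: "\<forall>i\<in>{1..k-1}. v i \<notin> {-1, 0, 1}"
  shows "is_LCD n (tgrs_code n k l eta alpha v)"
proof -
  have kn: "2 * k + 2 * l + 1 \<le> n" using k_le by simp
  have kn1: "k - 1 \<le> n" using kn by simp
  have alpha_nz: "alpha j \<noteq> 0" if "j \<in> {1..n}" for j
  proof
    assume "alpha j = 0"
    moreover have "alpha j ^ n = lam" using roots_iff[OF alpha_roots] that by blast
    ultimately show False using lam_nz n_pos by (simp add: power_0_left)
  qed
  have vsq: "v j ^ 2 - 1 \<noteq> 0" if "j \<in> {1..k-1}" for j
  proof
    assume "v j ^ 2 - 1 = 0"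
    hence "(v j - 1) * (v j + 1) = 0" by (simp add: algebra_simps power2_eq_square)
    thus False using v_other that by (auto simp: eq_neg_iff_add_eq_0)
  qed
  have nnz: "of_nat n \<noteq> (0::'a)" using of_nat_n_nz[OF n_dvd] .
  define zero :: "nat \<Rightarrow> 'a" where "zero = (\<lambda>_. 0)"
  have zero_in: "zero \<in> tgrs_code n k l eta alpha v"
    unfolding tgrs_code_def zero_def
    by (rule CollectI, rule exI[of _ "\<lambda>_. 0"]) (auto simp: tgrs_poly_def)
  have zero_dual: "zero \<in> dual_code n (tgrs_code n k l eta alpha v)"
    unfolding dual_code_def vecs_def zero_def by auto
  have main: "c = zero" if cC: "c \<in> tgrs_code n k l eta alpha v"
    and cD: "c \<in> dual_code n (tgrs_code n k l eta alpha v)" for c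
  proof -
    obtain fc where c_def: "c = (\<lambda>j. if j \<in> {1..n} then v j * poly (tgrs_poly k l eta fc) (alpha j) else 0)"
      using cC unfolding tgrs_code_def by blast
    define f where "f = tgrs_poly k l eta fc"
    have degf: "degree f \<le> k + l" unfolding f_def by (rule degree_tgrs)
    have orth: "(\<Sum>j=1..n. poly (f * tgrs_poly k l eta gc) (alpha j))
        + (\<Sum>j=1..k-1. (v j ^ 2 - 1) * poly (f * tgrs_poly k l eta gc) (alpha j)) = 0" for gc
    proof -
      define c' where "c' = (\<lambda>j. if j \<in> {1..n} then v j * poly (tgrs_poly k l eta gc) (alpha j) else 0)"
      have "c' \<in> tgrs_code n k l eta alpha v" unfolding c'_def tgrs_code_def by blast
      hence "(\<Sum>j=1..n. c' j * c j) = 0" using cD unfolding dual_code_def by blast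
      moreover have "(\<Sum>j=1..n. c' j * c j) = (\<Sum>j=1..n. v j ^ 2 * poly (f * tgrs_poly k l eta gc) (alpha j))"
        by (rule sum.cong) (auto simp: c_def c'_def f_def power2_eq_square)
      ultimately show ?thesis using split_sum[OF v_pm kn1] by simp
    qed
    have degfg: "degree (f * tgrs_poly k l eta gc) < n" for gc
      using degree_mult_le[of f "tgrs_poly k l eta gc"] degf degree_tgrs[of k l eta gc] kn by linarith
    have psum: "(\<Sum>j=1..n. poly (f * tgrs_poly k l eta gc) (alpha j)) = of_nat n * (fc 0 * gc 0)" for gc
    proof -
      have "coeff (f * tgrs_poly k l eta gc) 0 = poly (f * tgrs_poly k l eta gc) 0"
        by (simp add: poly_0_coeff_0)
      also have "\<dots> = fc 0 * gc 0" using k_ge by (simp add: f_def poly_tgrs_0)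
      finally show ?thesis using poly_sum_roots[OF alpha_roots alpha_distinct lam_nz degfg[of gc]] by simp
    qed
    have fA: "poly f (alpha j0) = 0" if j0: "j0 \<in> {1..k-1}" for j0
    proof -
      define L where "L = (\<Prod>j\<in>{1..k-1}-{j0}. [:- alpha j, 1:])"
      define g where "g = [:0, 1:] * L"
      have degL: "degree L \<le> k - 2"
      proof -
        have "degree L \<le> (\<Sum>j\<in>{1..k-1}-{j0}. degree [:- alpha j, 1:])"
          unfolding L_def using degree_prod_sum_le[of "{1..k-1}-{j0}" "\<lambda>j. [:- alpha j, 1:]"] by (simp add: o_def)
        also have "\<dots> = card ({1..k-1}-{j0})" by simp
        also have "\<dots> = k - 2" using j0 by simp
        finally show ?thesis .
      qed
      have degg: "degree g < k"
        using degree_mult_le[of "[:0,1:]" L] degL k_ge unfolding g_def by simp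
      have g0: "poly g 0 = 0" unfolding g_def by simp
      have gT: "tgrs_poly k l eta (coeff g) = g"
        unfolding tgrs_poly_def using sum_monom_coeff[OF degg] g0 by (simp add: poly_0_coeff_0)
      have o: "(\<Sum>j=1..k-1. (v j ^ 2 - 1) * poly (f * g) (alpha j)) = 0"
        using orth[of "coeff g"] psum[of "coeff g"] gT g0 by (simp add: poly_0_coeff_0)
      have "(\<Sum>j=1..k-1. (v j ^ 2 - 1) * poly (f * g) (alpha j))
          = (v j0 ^ 2 - 1) * poly (f * g) (alpha j0) + (\<Sum>j\<in>{1..k-1}-{j0}. (v j ^ 2 - 1) * poly (f * g) (alpha j))"
        using j0 by (simp add: sum.remove)
      also have "(\<Sum>j\<in>{1..k-1}-{j0}. (v j ^ 2 - 1) * poly (f * g) (alpha j)) = 0"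
        by (rule sum.neutral) (auto simp: g_def L_def poly_prod prod_zero_iff)
      finally have "(v j0 ^ 2 - 1) * poly (f * g) (alpha j0) = 0" using o by simp
      hence e: "poly f (alpha j0) * (alpha j0 * poly L (alpha j0)) = 0" using vsq[OF j0] by (auto simp: g_def)
      have "alpha j0 \<noteq> 0" using alpha_nz j0 kn1 by auto
      moreover have "poly L (alpha j0) \<noteq> 0"
      proof -
        have "alpha j0 \<noteq> alpha j" if "j \<in> {1..k-1}-{j0}" for j
          using that j0 kn1 alpha_distinct unfolding inj_on_def
          by (metis DiffE atLeastAtMost_iff insertI1 le_trans)
        thus ?thesis by (auto simp: L_def poly_prod prod_zero_iff)
      qed
      ultimately show ?thesis using e by simp
    qed
    define gc0 :: "nat \<Rightarrow> 'a" where "gc0 = (\<lambda>i. if i = 0 then 1 else 0)"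
    have "(\<Sum>j=1..k-1. (v j ^ 2 - 1) * poly (f * tgrs_poly k l eta gc0) (alpha j)) = 0"
      by (rule sum.neutral) (auto simp: fA)
    hence "of_nat n * fc 0 = 0" using orth[of gc0] psum[of gc0] by (simp add: gc0_def)
    hence fc0: "fc 0 = 0" using nnz by simp
    have fsum: "f = (\<Sum>i<k. monom (fc i) i)" unfolding f_def tgrs_poly_def using fc0 by simp
    have degf2: "degree f < k"
    proof -
      have "degree f \<le> k - 1" unfolding fsum
        by (rule degree_sum_le) (auto intro: order_trans[OF degree_monom_le])
      thus ?thesis using k_ge by simp
    qed
    have "f = 0"
    proof (rule ccontr)
      assume fnz: "f \<noteq> 0"
      have sub: "insert 0 (alpha ` {1..k-1}) \<subseteq> {x. poly f x = 0}"
        using fA fc0 k_ge by (auto simp: f_def poly_tgrs_0)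
      have "inj_on alpha {1..k-1}" using inj_on_subset[OF alpha_distinct, of "{1..k-1}"] kn1 by auto
      hence "card (alpha ` {1..k-1}) = k - 1" by (simp add: card_image)
      moreover have "0 \<notin> alpha ` {1..k-1}" using alpha_nz kn1 by fastforce
      ultimately have "card (insert 0 (alpha ` {1..k-1})) = k" using k_ge by simp
      hence "k \<le> card {x. poly f x = 0}"
        using card_mono[OF poly_roots_finite[OF fnz] sub] by simp
      also have "\<dots> \<le> degree f" by (rule card_poly_roots_bound[OF fnz])
      finally show False using degf2 by simp
    qed
    thus "c = zero" unfolding c_def zero_def f_def[symmetric] by auto
  qed
  show ?thesis unfolding is_LCD_def
    using main zero_in zero_dual unfolding zero_def by blast
qed

end
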